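(* Let $\varphi$ be a skew-morphism of a finite group $A$ with power function $\pi:A\to\mathbb{Z}_m$, where $m$ is the order of $\varphi$, let $n$ be a positive multiple of $m$, and let $\Pi:A\to\mathbb{Z}_n$ be an extended power function of $\varphi$. Then for all nonnegative integers $k,k_1,k_2,q,r$: (a) $\sigma_\Pi(xy,k)\equiv\sigma_\Pi(y,\sigma_\Pi(x,k))\pmod n$ for all $x,y\in A$; (b) $\sigma_\Pi(x,k)\equiv0\pmod n$ for all $x\in A$ if and only if $n\mid k$; (c) $\sigma_\Pi(x,qm+r)\equiv q\,\sigma_\Pi(x,m)+\sigma_\Pi(x,r)\pmod n$ for all $x\in A$; (d) $\sigma_\Pi(x,k_1)\equiv\sigma_\Pi(x,k_2)\pmod n$ for all $x\in A$ if and only if $k_1\equiv k_2\pmod n$.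
   Context: A skew-morphism of a finite group $A$ is a permutation $\varphi$ of $A$ with $\varphi(1_A)=1_A$ for which there is a function $\pi:A\to\mathbb{Z}_m$ ($m$ the order of $\varphi$) with $\varphi(xy)=\varphi(x)\varphi^{\pi(x)}(y)$ for all $x,y\in A$. For a positive multiple $n$ of $m$, $\Pi:A\to\mathbb{Z}_n$ is an extended power function of $\varphi$ if (i) $\Pi(x)\equiv\pi(x)\pmod m$ for all $x$; (ii) $\Pi(1_A)\equiv1\pmod n$; (iii) $\Pi(xy)\equiv\sum_{i=1}^{\Pi(x)}\Pi(\varphi^{i-1}(y))\pmod n$ for all $x,y\in A$. The derived function is $\sigma_\Pi(x,0)=0$, $\sigma_\Pi(x,k)=\sum_{i=1}^{k}\Pi(\varphi^{i-1}(x))\in\mathbb{Z}_n$ for $k>0$; in (a) the inner value is used as second argument via any nonnegative integer representative. *)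

theory Defs
  imports "HOL-Algebra.Group" "HOL-Number_Theory.Cong"
begin

definition perm_order :: "('a, 'b) monoid_scheme \<Rightarrow> ('a \<Rightarrow> 'a) \<Rightarrow> nat" where
  "perm_order G \<phi> = (LEAST m. 0 < m \<and> (\<forall>x\<in>carrier G. (\<phi> ^^ m) x = x))"

text \<open>phi is a skew-morphism of G with power function pi (values in Z_m represented by 0..m-1,
  m the order of phi).\<close>
definition skew_morphism ::
  "('a, 'b) monoid_scheme \<Rightarrow> ('a \<Rightarrow> 'a) \<Rightarrow> ('a \<Rightarrow> nat) \<Rightarrow> bool" where
  "skew_morphism G \<phi> \<pi> \<longleftrightarrow>
     bij_betw \<phi> (carrier G) (carrier G) \<and>
     \<phi> \<one>\<^bsub>G\<^esub> = \<one>\<^bsub>G\<^esub> \<and>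
     (\<forall>x\<in>carrier G. \<pi> x < perm_order G \<phi>) \<and>
     (\<forall>x\<in>carrier G. \<forall>y\<in>carrier G.
        \<phi> (x \<otimes>\<^bsub>G\<^esub> y) = \<phi> x \<otimes>\<^bsub>G\<^esub> (\<phi> ^^ \<pi> x) y)"

text \<open>Pi is an extended power function of phi (values in Z_n represented by 0..n-1).\<close>
definition ext_power_function ::
  "('a, 'b) monoid_scheme \<Rightarrow> ('a \<Rightarrow> 'a) \<Rightarrow> ('a \<Rightarrow> nat) \<Rightarrow> nat \<Rightarrow> ('a \<Rightarrow> nat) \<Rightarrow> bool" where
  "ext_power_function G \<phi> \<pi> n Pw \<longleftrightarrow>
     (\<forall>x\<in>carrier G. Pw x < n) \<and>
     (\<forall>x\<in>carrier G. [Pw x = \<pi> x] (mod perm_order G \<phi>)) \<and>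
     [Pw \<one>\<^bsub>G\<^esub> = 1] (mod n) \<and>
     (\<forall>x\<in>carrier G. \<forall>y\<in>carrier G.
        [Pw (x \<otimes>\<^bsub>G\<^esub> y) = (\<Sum>i<Pw x. Pw ((\<phi> ^^ i) y))] (mod n))"

text \<open>Derived function sigma_Pi(x,k) = sum_{i=1}^k Pi(phi^{i-1} x), as an element of Z_n
  (represented by 0..n-1).\<close>
definition sigma_fun :: "('a \<Rightarrow> 'a) \<Rightarrow> nat \<Rightarrow> ('a \<Rightarrow> nat) \<Rightarrow> 'a \<Rightarrow> nat \<Rightarrow> nat" where
  "sigma_fun \<phi> n Pw x k = (\<Sum>i<k. Pw ((\<phi> ^^ i) x)) mod n"

end

theory Submission
  imports Defs "HOL-Library.FuncSet"
begin

locale skw = group G for G (structure) +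
  fixes \<phi> :: "'a \<Rightarrow> 'a" and \<pi> Pw :: "'a \<Rightarrow> nat" and n :: nat
  assumes fin: "finite (carrier G)" and sk: "skew_morphism G \<phi> \<pi>"
    and npos: "0 < n" and mdvd: "perm_order G \<phi> dvd n"
    and ext: "ext_power_function G \<phi> \<pi> n Pw"
begin

abbreviation "m \<equiv> perm_order G \<phi>"

definition S where "S x k = (\<Sum>i<k. Pw ((\<phi> ^^ i) x))"

lemma bij: "bij_betw \<phi> (carrier G) (carrier G)"
  using sk unfolding skew_morphism_def by blast

lemma phi_closed: "x \<in> carrier G \<Longrightarrow> \<phi> x \<in> carrier G"
  using bij bij_betw_apply by fast

lemma pow_closed: "x \<in> carrier G \<Longrightarrow> (\<phi> ^^ i) x \<in> carrier G"
  by (induction i) (auto intro: phi_closed)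

lemma inj_pow: "inj_on (\<phi> ^^ i) (carrier G)"
proof (induction i)
  case 0 then show ?case by simp
next
  case (Suc i)
  have "inj_on \<phi> ((\<phi> ^^ i) ` carrier G)"
    using bij pow_closed unfolding bij_betw_def by (meson image_subsetI inj_on_subset)
  then have "inj_on (\<phi> \<circ> (\<phi> ^^ i)) (carrier G)" by (rule comp_inj_on[OF Suc.IH])
  then show ?case by (simp add: comp_def)
qed

lemma exists_id: "\<exists>k. 0 < k \<and> (\<forall>x\<in>carrier G. (\<phi> ^^ k) x = x)"
proof -
  define F where "F i = restrict (\<phi> ^^ i) (carrier G)" for i
  have "range F \<subseteq> carrier G \<rightarrow>\<^sub>E carrier G"
    using pow_closed by (auto simp: F_def)
  moreover have "finite (carrier G \<rightarrow>\<^sub>E carrier G)"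
    using fin by (simp add: finite_PiE)
  ultimately have "finite (range F)" using finite_subset by blast
  hence "\<not> inj F" using finite_imageD infinite_UNIV_nat by blast
  then obtain i j where ij: "F i = F j" "i \<noteq> j" unfolding inj_def by blast
  have "\<exists>i j. i < j \<and> F i = F j"
    using ij by (metis nat_neq_iff)
  then obtain i j where ij: "i < j" "F i = F j" by blast
  show ?thesis
  proof (intro exI conjI ballI)
    show "0 < j - i" using ij by simp
    fix x assume x: "x \<in> carrier G"
    have e: "i + (j - i) = j" using ij(1) by simp
    have "(\<phi> ^^ (i + (j - i))) x = (\<phi> ^^ i) ((\<phi> ^^ (j - i)) x)" by (simp add: funpow_add)
    hence e1: "(\<phi> ^^ i) ((\<phi> ^^ (j - i)) x) = (\<phi> ^^ j) x" using e by simp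
    have "F i x = F j x" using ij(2) by simp
    hence "(\<phi> ^^ j) x = (\<phi> ^^ i) x" using x by (simp add: F_def)
    with e1 have "(\<phi> ^^ i) ((\<phi> ^^ (j - i)) x) = (\<phi> ^^ i) x" by simp
    then show "(\<phi> ^^ (j - i)) x = x"
      using inj_pow[of i] x pow_closed[OF x, of "j - i"] unfolding inj_on_def by blast
  qed
qed

lemma m_pos: "0 < m" and m_id: "x \<in> carrier G \<Longrightarrow> (\<phi> ^^ m) x = x"
proof -
  have "0 < m \<and> (\<forall>x\<in>carrier G. (\<phi> ^^ m) x = x)"
    unfolding perm_order_def using exists_id by (rule LeastI_ex)
  then show "0 < m" "x \<in> carrier G \<Longrightarrow> (\<phi> ^^ m) x = x" by auto
qed

lemma pow_mult_m: "x \<in> carrier G \<Longrightarrow> (\<phi> ^^ (q * m)) x = x"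
proof (induction q)
  case 0 then show ?case by simp
next
  case (Suc q)
  have "(\<phi> ^^ (Suc q * m)) x = (\<phi> ^^ m) ((\<phi> ^^ (q * m)) x)"
    by (simp add: funpow_add)
  then show ?case using Suc m_id by simp
qed

lemma pow_mod: "x \<in> carrier G \<Longrightarrow> (\<phi> ^^ a) x = (\<phi> ^^ (a mod m)) x"
proof -
  assume x: "x \<in> carrier G"
  have "(\<phi> ^^ a) x = (\<phi> ^^ (a mod m)) ((\<phi> ^^ ((a div m) * m)) x)"
    by (metis comp_apply funpow_add mod_div_mult_eq)
  then show ?thesis using pow_mult_m x by simp
qed

lemma id_dvd: assumes "\<forall>y\<in>carrier G. (\<phi> ^^ a) y = y" shows "m dvd a"
proof (rule ccontr)
  assume "\<not> m dvd a"
  hence r: "0 < a mod m" "a mod m < m" using m_pos by (auto simp: mod_greater_zero_iff_not_dvd)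
  have "\<forall>y\<in>carrier G. (\<phi> ^^ (a mod m)) y = y"
  proof
    fix y assume y: "y \<in> carrier G"
    have "(\<phi> ^^ (a mod m)) y = (\<phi> ^^ a) y" using pow_mod[OF y] by (rule sym)
    also have "\<dots> = y" using assms y by blast
    finally show "(\<phi> ^^ (a mod m)) y = y" .
  qed
  with r have "m \<le> a mod m" unfolding perm_order_def by (intro Least_le) simp
  with r show False by simp
qed

lemma Pw_pow: "z \<in> carrier G \<Longrightarrow> y \<in> carrier G \<Longrightarrow> (\<phi> ^^ (Pw z + c)) y = (\<phi> ^^ (\<pi> z + c)) y"
proof -
  assume z: "z \<in> carrier G" and y: "y \<in> carrier G"
  have "[Pw z = \<pi> z] (mod m)" using ext z unfolding ext_power_function_def by blast
  hence "(Pw z + c) mod m = (\<pi> z + c) mod m" unfolding cong_def by (metis mod_add_left_eq)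
  then show ?thesis using pow_mod[OF y, of "Pw z + c"] pow_mod[OF y, of "\<pi> z + c"] by simp
qed

lemma key: "x \<in> carrier G \<Longrightarrow> y \<in> carrier G \<Longrightarrow>
   (\<phi> ^^ k) (x \<otimes> y) = (\<phi> ^^ k) x \<otimes> (\<phi> ^^ (S x k)) y"
proof (induction k)
  case 0 then show ?case by (simp add: S_def)
next
  case (Suc k)
  have hom: "\<forall>a\<in>carrier G. \<forall>b\<in>carrier G. \<phi> (a \<otimes> b) = \<phi> a \<otimes> (\<phi> ^^ \<pi> a) b"
    using sk unfolding skew_morphism_def by blast
  have "(\<phi> ^^ Suc k) (x \<otimes> y) = \<phi> ((\<phi> ^^ k) x \<otimes> (\<phi> ^^ (S x k)) y)" using Suc by simp
  also have "\<dots> = \<phi> ((\<phi> ^^ k) x) \<otimes> (\<phi> ^^ \<pi> ((\<phi> ^^ k) x)) ((\<phi> ^^ (S x k)) y)"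
    by (rule hom[rule_format, OF pow_closed[OF Suc.prems(1)] pow_closed[OF Suc.prems(2)]])
  also have "(\<phi> ^^ \<pi> ((\<phi> ^^ k) x)) ((\<phi> ^^ (S x k)) y) = (\<phi> ^^ (\<pi> ((\<phi> ^^ k) x) + S x k)) y"
    by (simp add: funpow_add)
  also have "\<dots> = (\<phi> ^^ (Pw ((\<phi> ^^ k) x) + S x k)) y"
    by (rule Pw_pow[OF pow_closed[OF Suc.prems(1)] Suc.prems(2), symmetric])
  also have "Pw ((\<phi> ^^ k) x) + S x k = S x (Suc k)" by (simp add: S_def)
  finally show ?case by simp
qed

lemma S_add: "S x (a + b) = S x a + S ((\<phi> ^^ a) x) b"
proof (induction b)
  case 0 then show ?case by (simp add: S_def)
next
  case (Suc b)
  have "(\<phi> ^^ (a + b)) x = (\<phi> ^^ b) ((\<phi> ^^ a) x)" by (metis add.commute comp_apply funpow_add)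
  then show ?case using Suc by (simp add: S_def)
qed

lemma S_m_dvd: assumes x: "x \<in> carrier G" shows "m dvd S x m"
proof (rule id_dvd, intro ballI)
  fix y assume y: "y \<in> carrier G"
  have "x \<otimes> y = (\<phi> ^^ m) (x \<otimes> y)" using m_id x y by simp
  also have "\<dots> = x \<otimes> (\<phi> ^^ (S x m)) y" using key x y m_id by simp
  finally have "x \<otimes> y = x \<otimes> (\<phi> ^^ (S x m)) y" .
  then show "(\<phi> ^^ (S x m)) y = y" using Units_l_cancel[of x y "(\<phi> ^^ S x m) y"] Units_eq x y pow_closed[OF y] by simp
qed

lemma S_qm: "x \<in> carrier G \<Longrightarrow> S x (q * m + k) = q * S x m + S x k"
proof (induction q)
  case 0 then show ?case by simp
next
  case (Suc q)
  have "S x (Suc q * m + k) = S x (m + (q * m + k))" by (simp add: add.assoc)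
  also have "\<dots> = S x m + S x (q * m + k)" using S_add m_id Suc.prems by simp
  finally show ?case using Suc by simp
qed

lemma S_qn: "x \<in> carrier G \<Longrightarrow> S x (q * n + k) = q * S x n + S x k"
proof -
  assume x: "x \<in> carrier G"
  obtain t where t: "n = m * t" using mdvd by blast
  have "S x (q * n + k) = (q * t) * S x m + S x k" using S_qm[OF x, of "q * t"] t
    by (simp add: mult.commute mult.left_commute)
  moreover have "S x n = t * S x m" using S_qm[OF x, of t 0] t by (simp add: mult.commute S_def)
  ultimately show ?thesis by simp
qed

lemma S_n_dvd: "x \<in> carrier G \<Longrightarrow> n dvd S x n"
proof -
  assume x: "x \<in> carrier G"
  obtain t where t: "n = m * t" using mdvd by blast
  have "S x n = t * S x m" using S_qm[OF x, of t 0] t by (simp add: mult.commute S_def)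
  then show ?thesis using S_m_dvd[OF x] t by (metis mult.commute mult_dvd_mono dvd_refl)
qed

lemma S_mod: "x \<in> carrier G \<Longrightarrow> S x k mod n = S x (k mod n) mod n"
proof -
  assume x: "x \<in> carrier G"
  have "S x k = (k div n) * S x n + S x (k mod n)"
    using S_qn[OF x, of "k div n" "k mod n"] by simp
  moreover obtain c where "S x n = n * c" using S_n_dvd[OF x] by blast
  ultimately have "S x k = S x (k mod n) + n * (k div n * c)" by simp
  then show ?thesis by simp
qed

lemma S_cong: "x \<in> carrier G \<Longrightarrow> [k1 = k2] (mod n) \<Longrightarrow> S x k1 mod n = S x k2 mod n"
  using S_mod unfolding cong_def by metis

lemma raw_a: "x \<in> carrier G \<Longrightarrow> y \<in> carrier G \<Longrightarrow> [S (x \<otimes> y) k = S y (S x k)] (mod n)"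
proof (induction k)
  case 0 then show ?case by (simp add: S_def)
next
  case (Suc k)
  have pm: "\<forall>a\<in>carrier G. \<forall>b\<in>carrier G.
        [Pw (a \<otimes> b) = (\<Sum>i<Pw a. Pw ((\<phi> ^^ i) b))] (mod n)"
    using ext unfolding ext_power_function_def by blast
  have "S (x \<otimes> y) (Suc k) = S (x \<otimes> y) k + Pw ((\<phi> ^^ k) x \<otimes> (\<phi> ^^ (S x k)) y)"
    using key Suc.prems by (simp add: S_def)
  moreover have "[Pw ((\<phi> ^^ k) x \<otimes> (\<phi> ^^ (S x k)) y) = S ((\<phi> ^^ (S x k)) y) (Pw ((\<phi> ^^ k) x))] (mod n)"
    using pm pow_closed Suc.prems unfolding S_def by blast
  moreover have "S y (S x (Suc k)) = S y (S x k) + S ((\<phi> ^^ (S x k)) y) (Pw ((\<phi> ^^ k) x))"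
    using S_add by (simp add: S_def)
  ultimately show ?case using cong_add[OF Suc.IH[OF Suc.prems]] by simp
qed

lemma S_one: "S \<one> k mod n = k mod n"
proof -
  have p1: "\<phi> \<one> = \<one>" using sk unfolding skew_morphism_def by blast
  have "(\<phi> ^^ i) \<one> = \<one>" for i by (induction i) (simp_all add: p1)
  hence "S \<one> k = k * Pw \<one>" by (simp add: S_def)
  moreover have "[Pw \<one> = 1] (mod n)" using ext unfolding ext_power_function_def by blast
  ultimately show ?thesis unfolding cong_def by (metis mod_mult_right_eq mult.right_neutral)
qed

lemma sigma_eq: "sigma_fun \<phi> n Pw x k = S x k mod n"
  by (simp add: sigma_fun_def S_def)

end

theorem proposition3p2:
  fixes G (structure) and \<phi> :: "'a \<Rightarrow> 'a" and \<pi> Pw :: "'a \<Rightarrow> nat" and n :: nat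
  assumes "group G" and "finite (carrier G)"
    and "skew_morphism G \<phi> \<pi>"
    and "0 < n" and "perm_order G \<phi> dvd n"
    and "ext_power_function G \<phi> \<pi> n Pw"
  shows "(\<forall>x\<in>carrier G. \<forall>y\<in>carrier G. \<forall>k.
            sigma_fun \<phi> n Pw (x \<otimes> y) k = sigma_fun \<phi> n Pw y (sigma_fun \<phi> n Pw x k))
     \<and> (\<forall>k. (\<forall>x\<in>carrier G. sigma_fun \<phi> n Pw x k = 0) \<longleftrightarrow> n dvd k)
     \<and> (\<forall>x\<in>carrier G. \<forall>q r.
            sigma_fun \<phi> n Pw x (q * perm_order G \<phi> + r)
              = (q * sigma_fun \<phi> n Pw x (perm_order G \<phi>) + sigma_fun \<phi> n Pw x r) mod n)
     \<and> (\<forall>k1 k2. (\<forall>x\<in>carrier G. sigma_fun \<phi> n Pw x k1 = sigma_fun \<phi> n Pw x k2)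
            \<longleftrightarrow> [k1 = k2] (mod n))"
proof -
  interpret skw G \<phi> \<pi> Pw n
    using assms by (simp add: skw_def skw_axioms_def)
  have one: "\<one> \<in> carrier G" by simp
  have A: "\<forall>x\<in>carrier G. \<forall>y\<in>carrier G. \<forall>k.
            sigma_fun \<phi> n Pw (x \<otimes> y) k = sigma_fun \<phi> n Pw y (sigma_fun \<phi> n Pw x k)"
  proof (intro ballI allI)
    fix x y k assume x: "x \<in> carrier G" and y: "y \<in> carrier G"
    have "S (x \<otimes> y) k mod n = S y (S x k) mod n" using raw_a[OF x y, of k] by (simp add: cong_def)
    also have "\<dots> = S y (S x k mod n) mod n" using S_mod y by blast
    finally show "sigma_fun \<phi> n Pw (x \<otimes> y) k = sigma_fun \<phi> n Pw y (sigma_fun \<phi> n Pw x k)"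
      by (simp add: sigma_eq)
  qed
  have D: "\<forall>k1 k2. (\<forall>x\<in>carrier G. sigma_fun \<phi> n Pw x k1 = sigma_fun \<phi> n Pw x k2)
            \<longleftrightarrow> [k1 = k2] (mod n)"
  proof (intro allI iffI)
    fix k1 k2 assume "\<forall>x\<in>carrier G. sigma_fun \<phi> n Pw x k1 = sigma_fun \<phi> n Pw x k2"
    hence "S \<one> k1 mod n = S \<one> k2 mod n" using one by (simp add: sigma_eq)
    then show "[k1 = k2] (mod n)" using S_one unfolding cong_def by simp
  next
    fix k1 k2 assume "[k1 = k2] (mod n)"
    then show "\<forall>x\<in>carrier G. sigma_fun \<phi> n Pw x k1 = sigma_fun \<phi> n Pw x k2"
      using S_cong by (simp add: sigma_eq)
  qed
  have B: "\<forall>k. (\<forall>x\<in>carrier G. sigma_fun \<phi> n Pw x k = 0) \<longleftrightarrow> n dvd k"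
  proof
    fix k
    have "sigma_fun \<phi> n Pw x 0 = 0" for x by (simp add: sigma_fun_def)
    then show "(\<forall>x\<in>carrier G. sigma_fun \<phi> n Pw x k = 0) \<longleftrightarrow> n dvd k"
      using D[rule_format, of k 0] by (simp add: cong_0_iff)
  qed
  have C: "\<forall>x\<in>carrier G. \<forall>q r.
            sigma_fun \<phi> n Pw x (q * perm_order G \<phi> + r)
              = (q * sigma_fun \<phi> n Pw x (perm_order G \<phi>) + sigma_fun \<phi> n Pw x r) mod n"
  proof (intro ballI allI)
    fix x q r assume x: "x \<in> carrier G"
    show "sigma_fun \<phi> n Pw x (q * perm_order G \<phi> + r)
              = (q * sigma_fun \<phi> n Pw x (perm_order G \<phi>) + sigma_fun \<phi> n Pw x r) mod n"
      unfolding sigma_eq S_qm[OF x] by (simp add: mod_add_left_eq mod_add_right_eq) (metis mod_add_left_eq mod_mult_right_eq)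
  qed
  show ?thesis using A B C D by blast
qed

end
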